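(* Let $G=(V,E)$ be an $S$-regular graph with cells $V_1,\dots,V_k$, $n_i=|V_i|$, cell function $\tau$, and let $B\subseteq V$. Write $B_i=B\cap V_i$, $b_i=|B_i|/n_i$, and $N_{B_i}(v)$ for the set of neighbours of $v$ in $B_i$. Then \[\sum_{v\in V}\sum_{i=1}^k\Bigl(|N_{B_i}(v)|-b_is_{\tau(v)i}\Bigr)^2\le\lambda_B^2\sum_{i=1}^k b_i(1-b_i)n_i.\]
   Context: All graphs are simple, undirected and connected. $G$ is $S$-regular ($S=(s_{ij})$ a $k\times k$ nonnegative integer matrix) if $V$ is partitioned into nonempty cells $V_1,\dots,V_k$ such that every vertex of $V_i$ has exactly $s_{ij}$ neighbours in $V_j$; $\tau(v)=i$ for $v\in V_i$. Let $A$ be the adjacency matrix, $|V|=n>k$. The subspace $W=\mathrm{span}\{\mathbf{1}_{V_1},\dots,\mathbf{1}_{V_k}\}$ is $A$-invariant, with eigenvalues on $W$ equal to those of $S$; the eigenvalues of $A$ on $W^\perp$ are the bulk eigenvalues, and $\lambda_B$ is the largest absolute value of a bulk eigenvalue. *)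

theory Defs
  imports Complex_Main
begin

definition simple_graph :: "'v set \<Rightarrow> ('v \<Rightarrow> 'v \<Rightarrow> bool) \<Rightarrow> bool" where
  "simple_graph V E \<longleftrightarrow> finite V \<and> (\<forall>u v. E u v \<longrightarrow> u \<in> V \<and> v \<in> V)
     \<and> (\<forall>u v. E u v \<longrightarrow> E v u) \<and> (\<forall>v. \<not> E v v)"

definition connected_graph :: "'v set \<Rightarrow> ('v \<Rightarrow> 'v \<Rightarrow> bool) \<Rightarrow> bool" where
  "connected_graph V E \<longleftrightarrow> V \<noteq> {} \<and> (\<forall>u\<in>V. \<forall>v\<in>V. E\<^sup>*\<^sup>* u v)"

text \<open>Cell V_i (cells indexed by 0..<k).\<close>
definition cell :: "'v set \<Rightarrow> ('v \<Rightarrow> nat) \<Rightarrow> nat \<Rightarrow> 'v set" where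
  "cell V \<tau> i = {v \<in> V. \<tau> v = i}"

definition S_regular :: "'v set \<Rightarrow> ('v \<Rightarrow> 'v \<Rightarrow> bool) \<Rightarrow> nat \<Rightarrow> (nat \<Rightarrow> nat \<Rightarrow> nat) \<Rightarrow> ('v \<Rightarrow> nat) \<Rightarrow> bool" where
  "S_regular V E k S \<tau> \<longleftrightarrow> (\<forall>v\<in>V. \<tau> v < k) \<and> (\<forall>i<k. cell V \<tau> i \<noteq> {})
     \<and> (\<forall>v\<in>V. \<forall>j<k. card {u \<in> cell V \<tau> j. E v u} = S (\<tau> v) j)"

definition adj_apply :: "'v set \<Rightarrow> ('v \<Rightarrow> 'v \<Rightarrow> bool) \<Rightarrow> ('v \<Rightarrow> real) \<Rightarrow> 'v \<Rightarrow> real" where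
  "adj_apply V E x v = (\<Sum>u\<in>V. (if E v u then 1 else 0) * x u)"

text \<open>mu is a bulk eigenvalue: an eigenvalue of A restricted to W^perp, where
  W = span of the cell indicator vectors.\<close>
definition bulk_eigenvalue :: "'v set \<Rightarrow> ('v \<Rightarrow> 'v \<Rightarrow> bool) \<Rightarrow> nat \<Rightarrow> ('v \<Rightarrow> nat) \<Rightarrow> real \<Rightarrow> bool" where
  "bulk_eigenvalue V E k \<tau> \<mu> \<longleftrightarrow> (\<exists>x :: 'v \<Rightarrow> real.
      (\<forall>v. v \<notin> V \<longrightarrow> x v = 0) \<and> (\<exists>v\<in>V. x v \<noteq> 0)
      \<and> (\<forall>i<k. (\<Sum>v\<in>cell V \<tau> i. x v) = 0)
      \<and> (\<forall>v\<in>V. adj_apply V E x v = \<mu> * x v))"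

definition lambda_B :: "'v set \<Rightarrow> ('v \<Rightarrow> 'v \<Rightarrow> bool) \<Rightarrow> nat \<Rightarrow> ('v \<Rightarrow> nat) \<Rightarrow> real" where
  "lambda_B V E k \<tau> = Max {\<bar>\<mu>\<bar> | \<mu>. bulk_eigenvalue V E k \<tau> \<mu>}"

end

theory Submission
  imports Defs "HOL-Analysis.Analysis" "HOL-Library.Function_Algebras"
begin

definition ip :: "'v set \<Rightarrow> ('v \<Rightarrow> real) \<Rightarrow> ('v \<Rightarrow> real) \<Rightarrow> real" where
  "ip V x y = (\<Sum>v\<in>V. x v * y v)"

lemma sum_ind: "finite A \<Longrightarrow> (\<Sum>x\<in>A. if P x then 1 else (0::real)) = real (card {x\<in>A. P x})"
proof -
  assume "finite A"
  have e: "{x\<in>A. P x} = A \<inter> {x. P x}" by auto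
  show ?thesis unfolding e using \<open>finite A\<close> by (simp add: sum.If_cases)
qed

definition scaleF :: "real \<Rightarrow> ('a \<Rightarrow> real) \<Rightarrow> ('a \<Rightarrow> real)" where
  "scaleF c f = (\<lambda>v. c * f v)"

interpretation fvs: vector_space scaleF
  by unfold_locales (auto simp: fun_eq_iff algebra_simps scaleF_def)

lemma fun_sum_apply: "(sum g T) v = (\<Sum>y\<in>T. (g y) v)"
  by (induction T rule: infinite_finite_induct) auto

lemma ip_pos: "finite V \<Longrightarrow> v \<in> V \<Longrightarrow> x v \<noteq> 0 \<Longrightarrow> ip V x x > 0"
  unfolding ip_def by (rule sum_pos2[of V v]) (auto simp: zero_less_mult_iff linorder_neq_iff)

lemma ip_nonneg: "ip V x x \<ge> 0"
  unfolding ip_def by (auto intro: sum_nonneg)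

locale sreg =
  fixes V :: "'v set" and E :: "'v \<Rightarrow> 'v \<Rightarrow> bool" and k :: nat
    and S :: "nat \<Rightarrow> nat \<Rightarrow> nat" and \<tau> :: "'v \<Rightarrow> nat"
  assumes sg: "simple_graph V E" and sr: "S_regular V E k S \<tau>"
begin

abbreviation "A x \<equiv> adj_apply V E x"
abbreviation "C i \<equiv> cell V \<tau> i"

definition U :: "('v \<Rightarrow> real) set" where "U = {x. (\<forall>v. v \<notin> V \<longrightarrow> x v = 0) \<and> (\<forall>i<k. (\<Sum>v\<in>C i. x v) = 0)}"

lemma finV: "finite V" using sg by (simp add: simple_graph_def)
lemma Ein: "E u v \<Longrightarrow> u \<in> V \<and> v \<in> V" using sg by (simp add: simple_graph_def)
lemma Esym: "E u v \<longleftrightarrow> E v u" using sg by (auto simp add: simple_graph_def)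
lemma tau_lt: "v \<in> V \<Longrightarrow> \<tau> v < k" using sr by (simp add: S_regular_def)
lemma reg: "v \<in> V \<Longrightarrow> j < k \<Longrightarrow> card {u \<in> C j. E v u} = S (\<tau> v) j"
  using sr by (simp add: S_regular_def)
lemma C_sub: "C i \<subseteq> V" by (auto simp: cell_def)
lemma finC: "finite (C i)" using finV C_sub finite_subset by blast

lemma adj_out: "v \<notin> V \<Longrightarrow> A x v = 0"
  unfolding adj_apply_def by (rule sum.neutral) (use Ein in auto)

lemma adj_cong: "(\<And>u. u \<in> V \<Longrightarrow> x u = y u) \<Longrightarrow> A x v = A y v"
  unfolding adj_apply_def by (auto intro: sum.cong)

lemma adj_lin: "A (\<lambda>u. x u + c * y u) v = A x v + c * A y v"
  unfolding adj_apply_def by (simp add: algebra_simps sum.distrib sum_distrib_left)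

lemma adj_scale: "A (\<lambda>u. c * y u) v = c * A y v"
  unfolding adj_apply_def by (simp add: algebra_simps sum_distrib_left)

lemma adj_sym: "ip V (A x) y = ip V x (A y)"
proof -
  have "ip V (A x) y = (\<Sum>v\<in>V. \<Sum>u\<in>V. (if E v u then 1 else 0) * x u * y v)"
    unfolding ip_def adj_apply_def by (simp add: sum_distrib_right)
  also have "\<dots> = (\<Sum>u\<in>V. \<Sum>v\<in>V. (if E v u then 1 else 0) * x u * y v)"
    by (rule sum.swap)
  also have "\<dots> = ip V x (A y)"
    unfolding ip_def adj_apply_def by (simp add: sum_distrib_left Esym[of _ ] mult.commute mult.left_commute)
  finally show ?thesis .
qed

lemma sum_V_split: "(\<Sum>u\<in>V. f u) = (\<Sum>j<k. \<Sum>u\<in>C j. f u)"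
proof -
  have "(\<Sum>j<k. \<Sum>u\<in>C j. f u) = (\<Sum>j<k. \<Sum>u\<in>{x\<in>V. \<tau> x = j}. f u)"
    by (simp add: cell_def)
  also have "\<dots> = (\<Sum>u\<in>V. f u)"
    by (rule sum.group) (use finV tau_lt in auto)
  finally show ?thesis by simp
qed

lemma adj_cellsum: assumes "x \<in> U" and "i < k" shows "(\<Sum>v\<in>C i. A x v) = 0"
proof -
  have "(\<Sum>v\<in>C i. A x v) = (\<Sum>u\<in>V. \<Sum>v\<in>C i. (if E v u then 1 else 0) * x u)"
    unfolding adj_apply_def by (rule sum.swap)
  also have "\<dots> = (\<Sum>u\<in>V. x u * real (card {v \<in> C i. E u v}))"
  proof (rule sum.cong[OF refl])
    fix u assume "u \<in> V"
    have "(\<Sum>v\<in>C i. (if E v u then 1 else 0) * x u) = x u * (\<Sum>v\<in>C i. (if E u v then 1 else 0))"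
      by (simp add: sum_distrib_left Esym[of _ u] mult.commute)
    also have "(\<Sum>v\<in>C i. (if E u v then 1 else 0::real)) = real (card {v \<in> C i. E u v})"
      using finC by (rule sum_ind)
    finally show "(\<Sum>v\<in>C i. (if E v u then 1 else 0) * x u) = x u * real (card {v \<in> C i. E u v})" .
  qed
  also have "\<dots> = (\<Sum>u\<in>V. x u * real (S (\<tau> u) i))"
    using reg assms(2) by (auto intro: sum.cong)
  also have "\<dots> = (\<Sum>j<k. \<Sum>u\<in>C j. x u * real (S (\<tau> u) i))" by (rule sum_V_split)
  also have "\<dots> = (\<Sum>j<k. real (S j i) * (\<Sum>u\<in>C j. x u))"
    by (auto intro!: sum.cong simp: sum_distrib_left cell_def mult.commute)
  also have "\<dots> = 0" using assms(1) by (simp add: U_def)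
  finally show ?thesis .
qed

lemma adj_U: "x \<in> U \<Longrightarrow> A x \<in> U"
  using adj_cellsum adj_out by (auto simp: U_def)

lemma U_lin: "x \<in> U \<Longrightarrow> y \<in> U \<Longrightarrow> (\<lambda>v. x v + c * y v) \<in> U"
proof -
  assume h: "x \<in> U" "y \<in> U"
  have "(\<Sum>v\<in>C i. x v + c * y v) = (\<Sum>v\<in>C i. x v) + c * (\<Sum>v\<in>C i. y v)" for i
    by (simp add: sum.distrib sum_distrib_left)
  then show ?thesis using h by (simp add: U_def)
qed


lemma bulk_finite: "finite {\<mu>. bulk_eigenvalue V E k \<tau> \<mu>}"
proof -
  let ?L = "{\<mu>. bulk_eigenvalue V E k \<tau> \<mu>}"
  let ?P = "\<lambda>\<mu> x. (\<forall>v. v \<notin> V \<longrightarrow> x v = 0) \<and> (\<exists>v\<in>V. x v \<noteq> 0)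
      \<and> (\<forall>i<k. (\<Sum>v\<in>cell V \<tau> i. x v) = 0) \<and> (\<forall>v\<in>V. A x v = \<mu> * x v)"
  define e where "e \<mu> = (SOME x. ?P \<mu> x)" for \<mu>
  have e: "?P \<mu> (e \<mu>)" if "\<mu> \<in> ?L" for \<mu>
  proof -
    have "\<exists>x. ?P \<mu> x" using that unfolding bulk_eigenvalue_def by simp
    then show ?thesis unfolding e_def by (rule someI_ex)
  qed
  have orth: "ip V (e \<mu>) (e \<nu>) = 0" if "\<mu> \<in> ?L" "\<nu> \<in> ?L" "\<mu> \<noteq> \<nu>" for \<mu> \<nu>
  proof -
    have "\<mu> * ip V (e \<mu>) (e \<nu>) = ip V (A (e \<mu>)) (e \<nu>)"
      using e[OF that(1)] unfolding ip_def by (auto simp: sum_distrib_left intro!: sum.cong)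
    also have "\<dots> = ip V (e \<mu>) (A (e \<nu>))" by (rule adj_sym)
    also have "\<dots> = \<nu> * ip V (e \<mu>) (e \<nu>)"
      using e[OF that(2)] unfolding ip_def by (auto simp: sum_distrib_left intro!: sum.cong)
    finally show ?thesis using that(3) by auto
  qed
  have pos: "ip V (e \<mu>) (e \<mu>) > 0" if "\<mu> \<in> ?L" for \<mu>
    using e[OF that] ip_pos[OF finV] by blast
  have inj: "inj_on e ?L"
  proof (rule inj_onI)
    fix \<mu> \<nu> assume h: "\<mu> \<in> ?L" "\<nu> \<in> ?L" "e \<mu> = e \<nu>"
    show "\<mu> = \<nu>" using orth[OF h(1,2)] pos[OF h(1)] h(3) by auto
  qed
  let ?D = "(\<lambda>w. \<lambda>u. if u = w then 1 else (0::real)) ` V"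
  have bound: "card F \<le> card V" if F: "F \<subseteq> ?L" "finite F" for F
  proof -
    have indep: "fvs.independent (e ` F)"
    proof (rule fvs.independent_if_scalars_zero)
      show "finite (e ` F)" using F by simp
      fix f x assume sum0: "(\<Sum>x\<in>e ` F. scaleF (f x) x) = 0" and x: "x \<in> e ` F"
      then obtain \<mu> where \<mu>: "\<mu> \<in> F" "x = e \<mu>" by auto
      have "0 = (\<Sum>v\<in>V. (\<Sum>y\<in>e ` F. scaleF (f y) y) v * x v)"
        using sum0 by simp
      also have "\<dots> = (\<Sum>v\<in>V. \<Sum>y\<in>e ` F. f y * (y v * x v))"
        unfolding fun_sum_apply scaleF_def
        by (rule sum.cong[OF refl]) (simp add: sum_distrib_right mult.assoc)
      also have "\<dots> = (\<Sum>y\<in>e ` F. \<Sum>v\<in>V. f y * (y v * x v))"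
        by (rule sum.swap)
      also have "\<dots> = (\<Sum>y\<in>e ` F. f y * ip V y x)"
        unfolding ip_def by (simp add: sum_distrib_left)
      also have "\<dots> = f x * ip V x x + (\<Sum>y\<in>e ` F - {x}. f y * ip V y x)"
        by (rule sum.remove) (use F(2) x in auto)
      also have "(\<Sum>y\<in>e ` F - {x}. f y * ip V y x) = 0"
      proof (rule sum.neutral, rule ballI)
        fix y assume y: "y \<in> e ` F - {x}"
        then obtain \<nu> where \<nu>: "\<nu> \<in> F" "y = e \<nu>" by auto
        then have "\<nu> \<noteq> \<mu>" using y \<mu> by auto
        then have "ip V y x = 0" using orth[of \<nu> \<mu>] \<nu> \<mu> F(1) by auto
        then show "f y * ip V y x = 0" by simp
      qed
      finally have "f x * ip V x x = 0" by simp
      moreover have "ip V x x > 0" using pos[of \<mu>] \<mu> F(1) by auto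
      ultimately show "f x = 0" by simp
    qed
    have finD: "finite ?D" using finV by simp
    have spn: "e ` F \<subseteq> fvs.span ?D"
    proof
      fix x assume "x \<in> e ` F"
      then obtain \<mu> where \<mu>: "\<mu> \<in> F" "x = e \<mu>" by auto
      then have out: "\<And>v. v \<notin> V \<Longrightarrow> x v = 0" using e[of \<mu>] F(1) by auto
      have "x = (\<Sum>w\<in>V. scaleF (x w) (\<lambda>u. if u = w then 1 else 0))"
      proof (rule ext)
        fix u
        have "(\<Sum>w\<in>V. scaleF (x w) (\<lambda>u. if u = w then 1 else 0)) u
              = (\<Sum>w\<in>V. if u = w then x w else 0)"
          unfolding fun_sum_apply scaleF_def by (auto intro: sum.cong)
        also have "\<dots> = x u" using finV out by (simp add: sum.delta)
        finally show "x u = (\<Sum>w\<in>V. scaleF (x w) (\<lambda>u. if u = w then 1 else 0)) u" by simp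
      qed
      also have "\<dots> \<in> fvs.span ?D"
        by (intro fvs.span_sum fvs.span_scale fvs.span_base) auto
      finally show "x \<in> fvs.span ?D" .
    qed
    have "card (e ` F) \<le> card ?D"
      using fvs.independent_span_bound[OF finD indep spn] by simp
    also have "\<dots> \<le> card V" by (rule card_image_le[OF finV])
    finally have "card (e ` F) \<le> card V" .
    moreover have "card (e ` F) = card F"
      using inj F(1) by (simp add: card_image inj_on_subset)
    ultimately show ?thesis by simp
  qed
  show ?thesis
  proof (rule ccontr)
    assume "infinite ?L"
    then obtain F where "F \<subseteq> ?L" "finite F" "card F = Suc (card V)"
      using infinite_arbitrarily_large by blast
    then show False using bound[of F] by simp
  qed
qed

lemma ip_cong: "(\<And>u. u \<in> V \<Longrightarrow> x u = y u) \<Longrightarrow> ip V x x = ip V y y"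
  unfolding ip_def by (auto intro: sum.cong)

lemma ipA_cong: "(\<And>u. u \<in> V \<Longrightarrow> x u = y u) \<Longrightarrow> ip V (A x) (A x) = ip V (A y) (A y)"
  using adj_cong[of x y] by (simp add: ip_def)

lemma maximizer:
  assumes x0: "x0 \<in> U" "ip V x0 x0 > 0"
  shows "\<exists>y\<in>U. ip V y y = 1 \<and> (\<forall>z\<in>U. ip V z z = 1 \<longrightarrow> ip V (A z) (A z) \<le> ip V (A y) (A y))"
proof -
  define X where "X = product_topology (\<lambda>_. euclideanreal) V"
  define F0 where "F0 x = (ip V x x - 1)\<^sup>2 + (\<Sum>i<k. (\<Sum>v\<in>C i. x v)\<^sup>2)" for x :: "'v \<Rightarrow> real"
  define g where "g x = ip V (A x) (A x)" for x :: "'v \<Rightarrow> real"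
  define K where "K = {x \<in> topspace X. F0 x \<in> {0}}"
  have proj: "continuous_map X euclideanreal (\<lambda>x. x v)" if "v \<in> V" for v
    unfolding X_def using continuous_map_product_projection[OF that, of "\<lambda>_. euclideanreal"] by simp
  have cF: "continuous_map X euclideanreal F0"
    unfolding F0_def ip_def
    by (intro continuous_intros proj finV finC) (use C_sub in auto)
  have cg: "continuous_map X euclideanreal g"
    unfolding g_def ip_def adj_apply_def
    by (intro continuous_intros proj finV) auto
  have clK: "closedin X K"
    unfolding K_def by (rule closedin_continuous_map_preimage[OF cF]) simp
  have top: "topspace X = PiE V (\<lambda>_. UNIV)"
    unfolding X_def by simp
  have F0_0: "ip V x x = 1 \<and> (\<forall>i<k. (\<Sum>v\<in>C i. x v) = 0)" if "F0 x = 0" for x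
  proof -
    have a: "(ip V x x - 1)\<^sup>2 \<ge> 0" by simp
    have b: "(\<Sum>i<k. (\<Sum>v\<in>C i. x v)\<^sup>2) \<ge> 0" by (rule sum_nonneg) simp
    have "(ip V x x - 1)\<^sup>2 = 0" "(\<Sum>i<k. (\<Sum>v\<in>C i. x v)\<^sup>2) = 0"
      using a b that unfolding F0_def by linarith+
    then show ?thesis using sum_nonneg_eq_0_iff[of "{..<k}" "\<lambda>i. (\<Sum>v\<in>C i. x v)\<^sup>2"] by auto
  qed
  have subK: "K \<subseteq> PiE V (\<lambda>_. {-1..1})"
  proof
    fix x assume xK: "x \<in> K"
    then have "F0 x = 0" by (simp add: K_def)
    then have s1: "ip V x x = 1" using F0_0 by blast
    have "\<bar>x v\<bar> \<le> 1" if "v \<in> V" for v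
    proof -
      have "(x v)\<^sup>2 \<le> ip V x x"
        unfolding ip_def power2_eq_square using that finV
        by (intro member_le_sum) auto
      then show ?thesis using s1 abs_square_le_1 by auto
    qed
    moreover have "x \<in> PiE V (\<lambda>_. UNIV)" using xK top by (simp add: K_def)
    ultimately show "x \<in> PiE V (\<lambda>_. {-1..1})" by (auto simp: PiE_def Pi_def abs_le_iff)
  qed
  have cpK: "compactin X K"
  proof (rule closed_compactin[OF _ subK clK])
    show "compactin X (PiE V (\<lambda>_. {-1..1::real}))"
      unfolding X_def by (simp add: compactin_PiE)
  qed
  have cpg: "compact (g ` K)"
    using image_compactin[OF cpK cg] by simp
  define s where "s = sqrt (ip V x0 x0)"
  have s: "s > 0" "s * s = ip V x0 x0" using x0(2) by (auto simp: s_def)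
  define y0 where "y0 = restrict (\<lambda>v. x0 v / s) V"
  have "y0 \<in> K"
  proof -
    have "ip V y0 y0 = ip V x0 x0 / (s * s)"
      unfolding ip_def y0_def by (simp add: sum_divide_distrib)
    then have "ip V y0 y0 = 1" using s x0(2) by simp
    moreover have "(\<Sum>v\<in>C i. y0 v) = 0" if "i < k" for i
    proof -
      have "(\<Sum>v\<in>C i. y0 v) = (\<Sum>v\<in>C i. x0 v) / s"
        unfolding y0_def using C_sub by (simp add: sum_divide_distrib subset_iff)
      then show ?thesis using x0(1) that by (simp add: U_def)
    qed
    ultimately have "F0 y0 = 0" unfolding F0_def by simp
    moreover have "y0 \<in> topspace X" unfolding top y0_def by simp
    ultimately show ?thesis by (simp add: K_def)
  qed
  then have "g ` K \<noteq> {}" by auto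
  from compact_attains_sup[OF cpg this] obtain y where y: "y \<in> K" "\<forall>z\<in>K. g z \<le> g y"
    by auto
  define y' where "y' v = (if v \<in> V then y v else 0)" for v
  have yF: "F0 y = 0" using y(1) by (simp add: K_def)
  have yV: "\<And>u. u \<in> V \<Longrightarrow> y' u = y u" by (simp add: y'_def)
  have "y' \<in> U"
  proof -
    have "(\<Sum>v\<in>C i. y' v) = (\<Sum>v\<in>C i. y v)" for i
      using C_sub by (intro sum.cong) (auto simp: y'_def)
    then show ?thesis using F0_0[OF yF] by (auto simp: U_def y'_def)
  qed
  moreover have "ip V y' y' = 1" using ip_cong[OF yV] F0_0[OF yF] by simp
  moreover have "ip V (A z) (A z) \<le> ip V (A y') (A y')" if z: "z \<in> U" "ip V z z = 1" for z
  proof -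
    define z' where "z' = restrict z V"
    have zV: "\<And>u. u \<in> V \<Longrightarrow> z' u = z u" by (simp add: z'_def)
    have "(\<Sum>v\<in>C i. z' v) = (\<Sum>v\<in>C i. z v)" for i
      using C_sub by (intro sum.cong) (auto simp: z'_def)
    then have "F0 z' = 0" using z ip_cong[OF zV] by (simp add: F0_def U_def)
    moreover have "z' \<in> topspace X" unfolding top z'_def by simp
    ultimately have "z' \<in> K" by (simp add: K_def)
    then have "g z' \<le> g y" using y(2) by blast
    then show ?thesis unfolding g_def using ipA_cong[OF zV] ipA_cong[OF yV] by simp
  qed
  ultimately show ?thesis by blast
qed

lemma ip_lin: "ip V (\<lambda>v. p v + c * q v) r = ip V p r + c * ip V q r"
  unfolding ip_def by (simp add: sum.distrib sum_distrib_left algebra_simps)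

lemma ip_comm: "ip V p q = ip V q p"
  unfolding ip_def by (simp add: mult.commute)

lemma ip_expand: "ip V (\<lambda>v. p v + t * q v) (\<lambda>v. p v + t * q v) = ip V p p + 2 * t * ip V p q + t\<^sup>2 * ip V q q"
proof -
  have "ip V (\<lambda>v. p v + t * q v) (\<lambda>v. p v + t * q v) = ip V p (\<lambda>v. p v + t * q v) + t * ip V q (\<lambda>v. p v + t * q v)"
    by (rule ip_lin)
  also have "ip V p (\<lambda>v. p v + t * q v) = ip V p p + t * ip V p q"
    using ip_lin[of p t q p] ip_comm by metis
  also have "ip V q (\<lambda>v. p v + t * q v) = ip V p q + t * ip V q q"
    using ip_lin[of p t q q] ip_comm by metis
  finally show ?thesis by (simp add: algebra_simps power2_eq_square)
qed

lemma ip_zero_on: assumes "ip V x x = 0" "u \<in> V" shows "x u = 0"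
proof -
  have "\<forall>v\<in>V. x v * x v = 0"
    using assms(1) finV unfolding ip_def by (subst sum_nonneg_eq_0_iff[symmetric]) auto
  then show ?thesis using assms(2) by auto
qed

lemma ipA_zero: assumes "ip V x x = 0" shows "ip V (A x) (A x) = 0"
proof -
  have "ip V (A x) (A x) = ip V (A (\<lambda>_. 0)) (A (\<lambda>_. 0))"
    by (rule ipA_cong) (use ip_zero_on[OF assms] in auto)
  also have "\<dots> = 0" by (simp add: ip_def adj_apply_def)
  finally show ?thesis .
qed

lemma U_scale: "x \<in> U \<Longrightarrow> (\<lambda>v. c * x v) \<in> U"
  using U_lin[of "\<lambda>_. 0" x c] by (simp add: U_def)

lemma bulk_le: "bulk_eigenvalue V E k \<tau> \<mu> \<Longrightarrow> \<bar>\<mu>\<bar> \<le> lambda_B V E k \<tau>"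
  unfolding lambda_B_def
proof (rule Max_ge)
  have "{\<bar>\<mu>\<bar> | \<mu>. bulk_eigenvalue V E k \<tau> \<mu>} = abs ` {\<mu>. bulk_eigenvalue V E k \<tau> \<mu>}" by auto
  then show "finite {\<bar>\<mu>\<bar> | \<mu>. bulk_eigenvalue V E k \<tau> \<mu>}" using bulk_finite by simp
qed auto

lemma key: assumes x: "x \<in> U" shows "ip V (A x) (A x) \<le> (lambda_B V E k \<tau>)\<^sup>2 * ip V x x"
proof (cases "ip V x x = 0")
  case True
  then show ?thesis using ipA_zero by simp
next
  case False
  then have xpos: "ip V x x > 0" using ip_nonneg[of V x] by linarith
  obtain y where y: "y \<in> U" "ip V y y = 1"
    and ymax: "\<forall>z\<in>U. ip V z z = 1 \<longrightarrow> ip V (A z) (A z) \<le> ip V (A y) (A y)"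
    using maximizer[OF x xpos] by blast
  define M where "M = ip V (A y) (A y)"
  have M0: "M \<ge> 0" unfolding M_def by (rule ip_nonneg)
  have bnd: "ip V (A z) (A z) \<le> M * ip V z z" if z: "z \<in> U" for z
  proof (cases "ip V z z = 0")
    case True
    then show ?thesis using ipA_zero by simp
  next
    case False
    then have zp: "ip V z z > 0" using ip_nonneg[of V z] by linarith
    define c where "c = 1 / sqrt (ip V z z)"
    have c2: "c\<^sup>2 * ip V z z = 1" using zp by (simp add: c_def power_divide)
    have "(\<lambda>v. c * z v) \<in> U" using U_scale[OF z] .
    moreover have "ip V (\<lambda>v. c * z v) (\<lambda>v. c * z v) = c\<^sup>2 * ip V z z"
      unfolding ip_def by (simp add: sum_distrib_left algebra_simps power2_eq_square)
    ultimately have "ip V (A (\<lambda>v. c * z v)) (A (\<lambda>v. c * z v)) \<le> M"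
      using ymax c2 M_def by simp
    moreover have "ip V (A (\<lambda>v. c * z v)) (A (\<lambda>v. c * z v)) = c\<^sup>2 * ip V (A z) (A z)"
      unfolding adj_scale ip_def by (simp add: sum_distrib_left algebra_simps power2_eq_square)
    ultimately have "c\<^sup>2 * ip V (A z) (A z) \<le> c\<^sup>2 * ip V z z * M" using c2 by simp
    moreover have "c \<noteq> 0" using zp by (simp add: c_def)
    then have cpos: "c\<^sup>2 > 0" by simp
    ultimately have "c\<^sup>2 * ip V (A z) (A z) \<le> c\<^sup>2 * (ip V z z * M)" by (simp only: mult.assoc)
    then have "ip V (A z) (A z) \<le> ip V z z * M"
      using mult_le_cancel_left_pos[OF cpos] by blast
    then show ?thesis by (simp add: mult.commute)
  qed
  define w where "w v = A (A y) v + (- M) * y v" for v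
  have wU: "w \<in> U" unfolding w_def by (rule U_lin[OF adj_U[OF adj_U[OF y(1)]] y(1)])
  define a where "a = ip V w w"
  define d where "d = ip V (A w) (A w)"
  have wy: "ip V w y = 0"
  proof -
    have "ip V w y = ip V (A (A y)) y - M * ip V y y"
      unfolding w_def ip_lin by simp
    also have "ip V (A (A y)) y = M" unfolding M_def by (rule adj_sym)
    finally show ?thesis using y(2) by simp
  qed
  have ayw: "ip V (A y) (A w) = a"
  proof -
    have "ip V (A y) (A w) = ip V (A (A y)) w" using adj_sym[of "A y" w] by simp
    also have "\<dots> = ip V (\<lambda>v. w v + M * y v) w"
      unfolding ip_def w_def by simp
    also have "\<dots> = a + M * ip V y w" unfolding ip_lin a_def ..
    also have "ip V y w = 0" using wy ip_comm by metis
    finally show ?thesis by simp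
  qed
  have ineq: "2 * t * a + t\<^sup>2 * d \<le> M * t\<^sup>2 * a" for t
  proof -
    have zU: "(\<lambda>v. y v + t * w v) \<in> U" by (rule U_lin[OF y(1) wU])
    have "ip V (A (\<lambda>v. y v + t * w v)) (A (\<lambda>v. y v + t * w v))
        = ip V (\<lambda>v. A y v + t * A w v) (\<lambda>v. A y v + t * A w v)"
    proof -
      have "A (\<lambda>v. y v + t * w v) = (\<lambda>v. A y v + t * A w v)"
        by (rule ext) (rule adj_lin)
      then show ?thesis by simp
    qed
    also have "\<dots> = M + 2 * t * a + t\<^sup>2 * d"
      unfolding ip_expand M_def ayw d_def ..
    finally have l: "ip V (A (\<lambda>v. y v + t * w v)) (A (\<lambda>v. y v + t * w v)) = M + 2 * t * a + t\<^sup>2 * d" .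
    have r: "ip V (\<lambda>v. y v + t * w v) (\<lambda>v. y v + t * w v) = 1 + t\<^sup>2 * a"
      using wy ip_comm[of y w] unfolding ip_expand y(2) a_def by simp
    show ?thesis using bnd[OF zU] unfolding l r by (simp add: algebra_simps)
  qed
  have a0: "a = 0"
  proof (rule ccontr)
    assume "a \<noteq> 0"
    then have ap: "a > 0" using ip_nonneg[of V w] a_def by linarith
    define t where "t = a / (\<bar>d - M * a\<bar> + 1)"
    have tp: "t > 0" using ap by (simp add: t_def)
    have "t * \<bar>d - M * a\<bar> < a"
    proof -
      have "t * \<bar>d - M * a\<bar> = a * (\<bar>d - M * a\<bar> / (\<bar>d - M * a\<bar> + 1))" by (simp add: t_def)
      also have "\<dots> < a * 1" using ap by (intro mult_strict_left_mono) auto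
      finally show ?thesis by simp
    qed
    moreover have "2 * a + t * (d - M * a) \<le> 0"
    proof -
      have "t * (2 * a + t * (d - M * a)) \<le> 0" using ineq[of t]
        by (simp add: algebra_simps power2_eq_square)
      then show ?thesis using tp by (simp add: mult_le_0_iff)
    qed
    moreover have "- (t * \<bar>d - M * a\<bar>) \<le> t * (d - M * a)"
    proof -
      have "- \<bar>d - M * a\<bar> \<le> d - M * a" by simp
      from mult_left_mono[OF this] tp have "t * (- \<bar>d - M * a\<bar>) \<le> t * (d - M * a)" by simp
      then show ?thesis by simp
    qed
    ultimately show False using ap by linarith
  qed
  have AAy: "A (A y) v = M * y v" if "v \<in> V" for v
    using ip_zero_on[OF a0[unfolded a_def] that] by (simp add: w_def)
  define s where "s = sqrt M"
  have ss: "s * s = M" "s \<ge> 0" using M0 by (auto simp: s_def)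
  have ex: "\<exists>\<mu>. bulk_eigenvalue V E k \<tau> \<mu> \<and> \<bar>\<mu>\<bar> = s"
  proof -
    define z where "z v = A y v + s * y v" for v
    have zU: "z \<in> U" unfolding z_def by (rule U_lin[OF adj_U[OF y(1)] y(1)])
    have Az: "A z v = s * z v" if "v \<in> V" for v
    proof -
      have "A z v = A (A y) v + s * A y v" unfolding z_def adj_lin ..
      also have "\<dots> = s * z v" using AAy[OF that] ss by (simp add: z_def algebra_simps)
      finally show ?thesis .
    qed
    show ?thesis
    proof (cases "\<exists>v\<in>V. z v \<noteq> 0")
      case True
      then have "bulk_eigenvalue V E k \<tau> s"
        unfolding bulk_eigenvalue_def using zU Az by (intro exI[of _ z]) (auto simp: U_def)
      then show ?thesis using ss by auto
    next
      case False
      then have Ay: "A y v = (- s) * y v" if "v \<in> V" for v using that by (auto simp: z_def)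
      have "\<exists>v\<in>V. y v \<noteq> 0"
      proof (rule ccontr)
        assume "\<not> (\<exists>v\<in>V. y v \<noteq> 0)"
        then have "ip V y y = 0" by (simp add: ip_def)
        then show False using y(2) by simp
      qed
      then have "bulk_eigenvalue V E k \<tau> (- s)"
        unfolding bulk_eigenvalue_def using y(1) Ay by (intro exI[of _ y]) (auto simp: U_def)
      then show ?thesis using ss by (intro exI[of _ "-s"]) auto
    qed
  qed
  then have sL: "s \<le> lambda_B V E k \<tau>" using bulk_le by blast
  have "M \<le> (lambda_B V E k \<tau>)\<^sup>2"
    using ss sL by (metis power2_eq_square power_mono)
  then have "M * ip V x x \<le> (lambda_B V E k \<tau>)\<^sup>2 * ip V x x"
    using xpos by (intro mult_right_mono) auto
  then show ?thesis using bnd[OF x] by linarith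
qed

end

theorem mainTheorem8:
  fixes V :: "'v set" and E :: "'v \<Rightarrow> 'v \<Rightarrow> bool" and k :: nat
    and S :: "nat \<Rightarrow> nat \<Rightarrow> nat" and \<tau> :: "'v \<Rightarrow> nat" and B :: "'v set"
  assumes "simple_graph V E"
    and "connected_graph V E"
    and "S_regular V E k S \<tau>"
    and "card V > k"
    and "B \<subseteq> V"
  shows "(\<Sum>v\<in>V. \<Sum>i<k.
            (real (card {u \<in> B \<inter> cell V \<tau> i. E v u})
             - (real (card (B \<inter> cell V \<tau> i)) / real (card (cell V \<tau> i))) * real (S (\<tau> v) i))\<^sup>2)
         \<le> (lambda_B V E k \<tau>)\<^sup>2 *
            (\<Sum>i<k. (real (card (B \<inter> cell V \<tau> i)) / real (card (cell V \<tau> i)))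
                   * (1 - real (card (B \<inter> cell V \<tau> i)) / real (card (cell V \<tau> i)))
                   * real (card (cell V \<tau> i)))"
proof -
  interpret sreg V E k S \<tau> using assms(1,3) by unfold_locales
  let ?L = "lambda_B V E k \<tau>"
  define b where "b i = real (card (B \<inter> C i)) / real (card (C i))" for i
  define x where "x i v = (if v \<in> B \<inter> C i then 1 else 0) - (if v \<in> C i then b i else 0)" for i v
  have npos: "card (C i) > 0" if "i < k" for i
    using assms(3) that finC by (auto simp: S_regular_def card_gt_0_iff)
  have bn: "b i * real (card (C i)) = real (card (B \<inter> C i))" if "i < k" for i
    using npos[OF that] by (simp add: b_def)
  have xU: "x i \<in> U" if i: "i < k" for i
  proof -
    have "(\<Sum>v\<in>C j. x i v) = 0" if j: "j < k" for j
    proof (cases "j = i")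
      case True
      have "(\<Sum>v\<in>C i. x i v) = (\<Sum>v\<in>C i. (if v \<in> B then 1 else 0)) - (\<Sum>v\<in>C i. b i)"
        unfolding x_def by (subst sum_subtractf[symmetric]) (auto intro: sum.cong)
      also have "(\<Sum>v\<in>C i. (if v \<in> B then 1 else (0::real))) = real (card (B \<inter> C i))"
      proof -
        have "{v \<in> C i. v \<in> B} = B \<inter> C i" by auto
        then show ?thesis using sum_ind[OF finC[of i], of "\<lambda>v. v \<in> B"] by simp
      qed
      also have "(\<Sum>v\<in>C i. b i) = b i * real (card (C i))" by simp
      finally show ?thesis using bn[OF i] True by simp
    next
      case False
      have "x i v = 0" if "v \<in> C j" for v using that False by (auto simp: x_def cell_def)
      then show ?thesis by simp
    qed
    moreover have "x i v = 0" if "v \<notin> V" for v using that C_sub by (auto simp: x_def)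
    ultimately show ?thesis by (simp add: U_def)
  qed
  have Ax: "A (x i) v = real (card {u \<in> B \<inter> C i. E v u}) - b i * real (S (\<tau> v) i)"
    if i: "i < k" and v: "v \<in> V" for i v
  proof -
    have "A (x i) v = (\<Sum>u\<in>V. (if E v u \<and> u \<in> B \<inter> C i then 1 else 0) - b i * (if E v u \<and> u \<in> C i then 1 else 0))"
      unfolding adj_apply_def x_def by (intro sum.cong) auto
    also have "\<dots> = (\<Sum>u\<in>V. (if E v u \<and> u \<in> B \<inter> C i then 1 else 0)) - b i * (\<Sum>u\<in>V. (if E v u \<and> u \<in> C i then 1 else 0))"
      by (simp add: sum_subtractf sum_distrib_left)
    also have "(\<Sum>u\<in>V. (if E v u \<and> u \<in> B \<inter> C i then 1 else (0::real))) = real (card {u \<in> B \<inter> C i. E v u})"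
    proof -
      have "{u \<in> V. E v u \<and> u \<in> B \<inter> C i} = {u \<in> B \<inter> C i. E v u}" using C_sub by auto
      then show ?thesis using sum_ind[OF finV, of "\<lambda>u. E v u \<and> u \<in> B \<inter> C i"] by simp
    qed
    also have "(\<Sum>u\<in>V. (if E v u \<and> u \<in> C i then 1 else (0::real))) = real (S (\<tau> v) i)"
    proof -
      have "{u \<in> V. E v u \<and> u \<in> C i} = {u \<in> C i. E v u}" using C_sub by auto
      then show ?thesis using sum_ind[OF finV, of "\<lambda>u. E v u \<and> u \<in> C i"] reg[OF v i] by simp
    qed
    finally show ?thesis .
  qed
  have xx: "ip V (x i) (x i) = b i * (1 - b i) * real (card (C i))" if i: "i < k" for i
  proof -
    have "ip V (x i) (x i) = (\<Sum>v\<in>C i. x i v * x i v)"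
      unfolding ip_def by (rule sum.mono_neutral_right[OF finV C_sub]) (auto simp: x_def)
    also have "\<dots> = (\<Sum>v\<in>C i. if v \<in> B then (1 - b i)\<^sup>2 else (b i)\<^sup>2)"
      by (intro sum.cong) (auto simp: x_def power2_eq_square)
    also have "\<dots> = real (card (C i \<inter> B)) * (1 - b i)\<^sup>2 + real (card (C i - B)) * (b i)\<^sup>2"
    proof -
      have e1: "C i \<inter> {v. v \<in> B} = C i \<inter> B" "C i \<inter> - {v. v \<in> B} = C i - B" "C i \<inter> - B = C i - B" by auto
      show ?thesis using finC[of i] by (simp add: sum.If_cases e1)
    qed
    also have "real (card (C i - B)) = real (card (C i)) - real (card (B \<inter> C i))"
    proof -
      have "card (C i - B) = card (C i) - card (C i \<inter> B)" by (rule card_Diff_subset_Int) (use finC in auto)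
      moreover have "card (C i \<inter> B) \<le> card (C i)" by (rule card_mono) (use finC in auto)
      ultimately show ?thesis by (simp add: Int_commute of_nat_diff)
    qed
    also have "C i \<inter> B = B \<inter> C i" by auto
    finally have "ip V (x i) (x i) = real (card (B \<inter> C i)) * (1 - b i)\<^sup>2 + (real (card (C i)) - real (card (B \<inter> C i))) * (b i)\<^sup>2" .
    then show ?thesis unfolding bn[OF i, symmetric] by (simp add: algebra_simps power2_eq_square)
  qed
  have "(\<Sum>v\<in>V. \<Sum>i<k.
            (real (card {u \<in> B \<inter> cell V \<tau> i. E v u})
             - (real (card (B \<inter> cell V \<tau> i)) / real (card (cell V \<tau> i))) * real (S (\<tau> v) i))\<^sup>2)
        = (\<Sum>v\<in>V. \<Sum>i<k. (A (x i) v)\<^sup>2)"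
    using Ax by (intro sum.cong refl) (simp add: b_def)
  also have "\<dots> = (\<Sum>i<k. ip V (A (x i)) (A (x i)))"
    unfolding ip_def power2_eq_square by (rule sum.swap)
  also have "\<dots> \<le> (\<Sum>i<k. ?L\<^sup>2 * ip V (x i) (x i))"
    using key xU by (intro sum_mono) auto
  also have "\<dots> = ?L\<^sup>2 * (\<Sum>i<k. b i * (1 - b i) * real (card (C i)))"
    using xx by (simp add: sum_distrib_left)
  finally show ?thesis by (simp add: b_def)
qed

end
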